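(* Assume that $\tilde Y$ is conditionally independent of $X$ given $Y$, and that all classes have positive probability under both $Y$ and $\tilde Y$. Fix any prediction function $\mathcal C$ and let $\hat C(X_{n+1})$ be produced by the standard marginal conformal method applied to the contaminated data $\mathcal D$. Suppose that, almost surely, for all $t\in\mathbb R$ and $k\in[K]$, $$\max_{l\ne k}F^l_k(t)\le F^k_k(t),$$ where $F^l_k(t)=\mathbb P[\hat s(X,l)\le t\mid Y=k,\mathcal D^{\mathrm{train}}]$. Then $\Delta(\hat\tau)\ge0$ almost surely, and hence $\mathbb P[Y_{n+1}\in\hat C(X_{n+1})]\ge1-\alpha$.
   Context: Let $K\ge 2$, $d\ge 1$, $n\ge 2$ be integers and $[m]=\{1,\dots,m\}$. Let $(X_i,Y_i,\tilde Y_i)$, $i\in[n+1]$, be i.i.d. copies of a random triple $(X,Y,\tilde Y)$ with $X\in\mathbb R^d$, true (unobserved) label $Y\in[K]$ and observed, possibly contaminated, label $\tilde Y\in[K]$. The observed data are $\mathcal D=\{(X_i,\tilde Y_i)\}_{i\in[n]}$; $X_{n+1}$ is a test feature vector with unknown label $Y_{n+1}$. The index set $[n]$ is split, independently of all data, into disjoint nonempty sets $\mathcal D^{\mathrm{train}}$ and $\mathcal D^{\mathrm{cal}}$ (a fixed split; $n_{\mathrm{cal}}=|\mathcal D^{\mathrm{cal}}|$), and a classifier $\hat\pi$ is fitted using only the observations indexed by $\mathcal D^{\mathrm{train}}$. A prediction function is a map $\mathcal C$ (which may depend on $\hat\pi$) assigning to each $x\in\mathbb R^d$ and $\tau=(\tau_1,\dots,\tau_K)\in[0,1]^K$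 a set $\mathcal C(x,\tau)\subseteq[K]$ such that: $\mathcal C(x,\tau)$ is nondecreasing (for inclusion) in each coordinate of $\tau$; whether $k\in\mathcal C(x,\tau)$ depends on $\tau$ only through $\tau_k$; and $k\in\mathcal C(x,\tau)$ whenever $\tau_k=1$. The associated conformity score is $\hat s(x,k)=\inf\{\tau_k\in[0,1]: k\in\mathcal C(x,\tau)\}$, and it is understood that $k\in\mathcal C(x,\tau)$ if and only if $\hat s(x,k)\le\tau_k$. Let $\alpha\in(0,1)$. Probabilities and expectations are over all data (not conditioned on class counts). Let $F(t)=\mathbb P[\hat s(X,Y)\le t\mid\mathcal D^{\mathrm{train}}]$ and $\tilde F(t)=\mathbb P[\hat s(X,\tilde Y)\le t\mid\mathcal D^{\mathrm{train}}]$ for a fresh independent copy $(X,Y,\tilde Y)$, and the marginal coverage inflation factor $\Delta(t)=F(t)-\tilde F(t)$. Standard marginal conformal method: $\hat\tau$ is the $\lceil(1+n_{\mathrm{cal}})(1-\alpha)\rceil$-th smallest value in $\{\hat s(X_i,\tilde Y_i):i\in\mathcal D^{\mathrm{cal}}\}$ (with $\hat\tau=1$ if this index exceeds $n_{\mathrm{cal}}$), and $\hat C(X_{n+1})=\mathcal C(X_{n+1},(\hat\tau,\dots,\hat\tau))$. *)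

theory Defs
  imports "HOL-Probability.Probability" "HOL-Library.Multiset"
begin

text \<open>Threshold vectors tau in [0,1]^K, represented as functions nat => real
  (only the coordinates 1..K are constrained).\<close>
definition tau_cube :: "nat \<Rightarrow> (nat \<Rightarrow> real) set" where
  "tau_cube K = {\<tau>. \<forall>i\<in>{1..K}. \<tau> i \<in> {0..1}}"

definition score :: "nat \<Rightarrow> ('x \<Rightarrow> (nat \<Rightarrow> real) \<Rightarrow> nat set) \<Rightarrow> 'x \<Rightarrow> nat \<Rightarrow> real" where
  "score K C x k = Inf {\<tau> k | \<tau>. \<tau> \<in> tau_cube K \<and> k \<in> C x \<tau>}"

definition prediction_function :: "nat \<Rightarrow> ('x \<Rightarrow> (nat \<Rightarrow> real) \<Rightarrow> nat set) \<Rightarrow> bool" where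
  "prediction_function K C \<longleftrightarrow>
     (\<forall>x. \<forall>\<tau>\<in>tau_cube K. C x \<tau> \<subseteq> {1..K})
   \<and> (\<forall>x. \<forall>\<tau>\<in>tau_cube K. \<forall>\<tau>'\<in>tau_cube K.
         (\<forall>i\<in>{1..K}. \<tau> i \<le> \<tau>' i) \<longrightarrow> C x \<tau> \<subseteq> C x \<tau>')
   \<and> (\<forall>x. \<forall>k\<in>{1..K}. \<forall>\<tau>\<in>tau_cube K. \<forall>\<tau>'\<in>tau_cube K.
         \<tau> k = \<tau>' k \<longrightarrow> (k \<in> C x \<tau> \<longleftrightarrow> k \<in> C x \<tau>'))
   \<and> (\<forall>x. \<forall>k\<in>{1..K}. \<forall>\<tau>\<in>tau_cube K. \<tau> k = 1 \<longrightarrow> k \<in> C x \<tau>)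
   \<and> (\<forall>x. \<forall>k\<in>{1..K}. \<forall>\<tau>\<in>tau_cube K. k \<in> C x \<tau> \<longleftrightarrow> score K C x k \<le> \<tau> k)"

definition conf_threshold :: "real \<Rightarrow> real multiset \<Rightarrow> real" where
  "conf_threshold \<alpha> S =
     (let m = size S; j = nat \<lceil>(1 + real m) * (1 - \<alpha>)\<rceil>
      in if j > m then 1 else sorted_list_of_multiset S ! (j - 1))"

end

theory Submission
  imports Defs
begin


lemma kth_le_iff:
  fixes S :: "real multiset"
  assumes "1 \<le> j" "j \<le> size S"
  shows "v \<le> sorted_list_of_multiset S ! (j-1) \<longleftrightarrow> size (filter_mset (\<lambda>x. x < v) S) < j"
proof -
  define xs where "xs = sorted_list_of_multiset S"
  have m: "mset xs = S" "sorted xs" unfolding xs_def by auto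
  have len: "length xs = size S" using m by (metis size_mset)
  have "size (filter_mset (\<lambda>x. x < v) S) = length (filter (\<lambda>x. x < v) xs)"
    using m by (metis mset_filter size_mset)
  also have "\<dots> = card {i. i < length xs \<and> xs!i < v}" by (rule length_filter_conv_card)
  finally have c: "size (filter_mset (\<lambda>x. x < v) S) = card {i. i < length xs \<and> xs!i < v}" .
  show ?thesis
  proof (cases "xs!(j-1) < v")
    case True
    have "{..<j} \<subseteq> {i. i < length xs \<and> xs!i < v}"
    proof
      fix i assume "i \<in> {..<j}"
      then have "i \<le> j - 1" "j - 1 < length xs" using assms len by auto
      then have "xs!i \<le> xs!(j-1)" using m(2) sorted_nth_mono by blast
      then show "i \<in> {i. i < length xs \<and> xs!i < v}" using True \<open>i \<le> j-1\<close> \<open>j-1 < length xs\<close> by auto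
    qed
    then have "j \<le> card {i. i < length xs \<and> xs!i < v}"
      by (metis card_lessThan card_mono finite_Collect_conjI finite_Collect_less_nat)
    then show ?thesis using True c xs_def by auto
  next
    case False
    have "{i. i < length xs \<and> xs!i < v} \<subseteq> {..<j-1}"
    proof
      fix i assume i: "i \<in> {i. i < length xs \<and> xs!i < v}"
      show "i \<in> {..<j-1}"
      proof (rule ccontr)
        assume "i \<notin> {..<j-1}"
        then have "j - 1 \<le> i" by auto
        then have "xs!(j-1) \<le> xs!i" using m(2) sorted_nth_mono i by blast
        then show False using False i by auto
      qed
    qed
    then have "card {i. i < length xs \<and> xs!i < v} \<le> j - 1"
      by (metis card_lessThan card_mono finite_lessThan)
    then show ?thesis using False c xs_def assms by auto
  qed
qed

lemma many_good:
  fixes V :: "nat \<Rightarrow> real"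
  assumes J: "finite J" and j: "j \<le> card J"
  shows "j \<le> card {i\<in>J. card {l\<in>J. V l < V i} < j}"
proof (cases "J - {i\<in>J. card {l\<in>J. V l < V i} < j} = {}")
  case True
  then have "{i\<in>J. card {l\<in>J. V l < V i} < j} = J" by auto
  then show ?thesis using j by simp
next
  case False
  define B where "B = J - {i\<in>J. card {l\<in>J. V l < V i} < j}"
  have fB: "finite B" using J B_def by auto
  have "Min (V ` B) \<in> V ` B" using Min_in fB False B_def by blast
  then obtain i0 where i0: "i0 \<in> B" "V i0 = Min (V ` B)" by auto
  have mn: "\<And>i. i \<in> B \<Longrightarrow> V i0 \<le> V i" using i0 fB by simp
  have L: "j \<le> card {l\<in>J. V l < V i0}" using i0 B_def by auto
  have "{l\<in>J. V l < V i0} \<subseteq> {i\<in>J. card {l\<in>J. V l < V i} < j}"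
  proof
    fix l assume l: "l \<in> {l\<in>J. V l < V i0}"
    show "l \<in> {i\<in>J. card {l\<in>J. V l < V i} < j}"
    proof (rule ccontr)
      assume "l \<notin> {i\<in>J. card {l\<in>J. V l < V i} < j}"
      then have "l \<in> B" using l B_def by auto
      then show False using mn l by fastforce
    qed
  qed
  then have "card {l\<in>J. V l < V i0} \<le> card {i\<in>J. card {l\<in>J. V l < V i} < j}"
    using J by (intro card_mono) auto
  then show ?thesis using L by linarith
qed


lemma part1:
  fixes P :: "((real^('d::finite)) \<times> nat \<times> nat) measure" and g :: "real^'d \<Rightarrow> nat \<Rightarrow> real"
  assumes P_prob: "prob_space P"
    and P_sets: "sets P = sets (borel \<Otimes>\<^sub>M count_space {1..K} \<Otimes>\<^sub>M count_space {1..K})"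
    and pos_Y: "\<forall>k\<in>{1..K}. measure P {z \<in> space P. fst (snd z) = k} > 0"
    and cond_indep: "\<forall>A\<in>sets (borel :: (real^'d) measure). \<forall>j\<in>{1..K}. \<forall>k\<in>{1..K}.
        measure P {z \<in> space P. fst z \<in> A \<and> snd (snd z) = j \<and> fst (snd z) = k}
          / measure P {z \<in> space P. fst (snd z) = k}
        = (measure P {z \<in> space P. fst z \<in> A \<and> fst (snd z) = k}
            / measure P {z \<in> space P. fst (snd z) = k})
        * (measure P {z \<in> space P. snd (snd z) = j \<and> fst (snd z) = k}
            / measure P {z \<in> space P. fst (snd z) = k})"
    and g_meas: "\<And>l. l\<in>{1..K} \<Longrightarrow> (\<lambda>x. g x l) \<in> borel_measurable borel"
    and dom: "\<forall>k\<in>{1..K}. \<forall>l\<in>{1..K}. l \<noteq> k \<longrightarrow>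
        measure P {z \<in> space P. fst (snd z) = k \<and> g (fst z) l \<le> t} / measure P {z \<in> space P. fst (snd z) = k}
      \<le> measure P {z \<in> space P. fst (snd z) = k \<and> g (fst z) k \<le> t} / measure P {z \<in> space P. fst (snd z) = k}"
  shows "measure P {z\<in>space P. g (fst z) (snd (snd z)) \<le> t} \<le> measure P {z\<in>space P. g (fst z) (fst (snd z)) \<le> t}"
proof -
  interpret prob_space P by (rule P_prob)
  let ?M = "borel \<Otimes>\<^sub>M count_space {1..K} \<Otimes>\<^sub>M count_space {1..K} :: ((real^'d) \<times> nat \<times> nat) measure"
  have sp: "space P = UNIV \<times> {1..K} \<times> {1..K}"
    using sets_eq_imp_space_eq[OF P_sets] by (simp add: space_pair_measure)
  have inS: "{z\<in>space P. Q z} \<in> sets P" if "Measurable.pred ?M Q" for Q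
  proof -
    have a: "{z\<in>space ?M. Q z} \<in> sets ?M" using that by (rule predE)
    have b: "space P = space ?M" using sets_eq_imp_space_eq[OF P_sets] .
    show ?thesis unfolding b P_sets by (rule a)
  qed
  define p where "p k = measure P {z \<in> space P. fst (snd z) = k}" for k
  define q where "q j k = measure P {z \<in> space P. snd (snd z) = j \<and> fst (snd z) = k}" for j k
  define D where "D j k = {z \<in> space P. fst (snd z) = k \<and> g (fst z) j \<le> t}" for j k
  define E where "E j k = {z \<in> space P. snd (snd z) = j \<and> fst (snd z) = k \<and> g (fst z) j \<le> t}" for j k
  have Dm: "D j k \<in> sets P" if "j \<in> {1..K}" for j k
  proof -
    note [measurable] = g_meas[OF that]
    show ?thesis unfolding D_def by (rule inS) measurable
  qed
  have Em: "E j k \<in> sets P" if "j \<in> {1..K}" for j k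
  proof -
    note [measurable] = g_meas[OF that]
    show ?thesis unfolding E_def by (rule inS) measurable
  qed
  have qm: "{z \<in> space P. snd (snd z) = j \<and> fst (snd z) = k} \<in> sets P" for j k
    by (rule inS) measurable
  have Eeq: "measure P (E j k) = (measure P (D j k) / p k) * q j k" if jk: "j \<in> {1..K}" "k \<in> {1..K}" for j k
  proof -
    note [measurable] = g_meas[OF jk(1)]
    have A: "{x. g x j \<le> t} \<in> sets borel" by measurable
    have e1: "{z \<in> space P. fst z \<in> {x. g x j \<le> t} \<and> snd (snd z) = j \<and> fst (snd z) = k} = E j k"
      unfolding E_def by auto
    have e2: "{z \<in> space P. fst z \<in> {x. g x j \<le> t} \<and> fst (snd z) = k} = D j k"
      unfolding D_def by auto
    have "measure P (E j k) / p k = (measure P (D j k) / p k) * (q j k / p k)"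
    proof -
      have "measure P {z \<in> space P. fst z \<in> {x. g x j \<le> t} \<and> snd (snd z) = j \<and> fst (snd z) = k}
          / measure P {z \<in> space P. fst (snd z) = k}
        = (measure P {z \<in> space P. fst z \<in> {x. g x j \<le> t} \<and> fst (snd z) = k}
            / measure P {z \<in> space P. fst (snd z) = k})
        * (measure P {z \<in> space P. snd (snd z) = j \<and> fst (snd z) = k}
            / measure P {z \<in> space P. fst (snd z) = k})"
        using cond_indep A jk by blast
      then show ?thesis unfolding e1 e2 p_def q_def .
    qed
    moreover have "p k > 0" using pos_Y jk p_def by auto
    ultimately show ?thesis by (simp add: field_simps)
  qed
  have Ele: "measure P (E j k) \<le> (measure P (D k k) / p k) * q j k" if jk: "j \<in> {1..K}" "k \<in> {1..K}" for j k
  proof -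
    have "measure P (D j k) / p k \<le> measure P (D k k) / p k"
      using dom jk unfolding D_def p_def by (cases "j = k") auto
    moreover have "q j k \<ge> 0" unfolding q_def by simp
    ultimately have "(measure P (D j k) / p k) * q j k \<le> (measure P (D k k) / p k) * q j k"
      by (rule mult_right_mono)
    then show ?thesis using Eeq[OF jk] by linarith
  qed
  have qsum: "(\<Sum>j\<in>{1..K}. q j k) = p k" for k
  proof -
    have "{z \<in> space P. fst (snd z) = k} = (\<Union>j\<in>{1..K}. {z \<in> space P. snd (snd z) = j \<and> fst (snd z) = k})"
      using sp by auto
    then have "p k = measure P (\<Union>j\<in>{1..K}. {z \<in> space P. snd (snd z) = j \<and> fst (snd z) = k})"
      unfolding p_def by simp
    also have "\<dots> = (\<Sum>j\<in>{1..K}. q j k)" unfolding q_def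
      by (rule finite_measure_finite_Union) (auto simp: qm disjoint_family_on_def)
    finally show ?thesis by simp
  qed
  have "{z\<in>space P. g (fst z) (snd (snd z)) \<le> t} = (\<Union>jk\<in>{1..K}\<times>{1..K}. E (fst jk) (snd jk))"
    using sp unfolding E_def by force
  then have "measure P {z\<in>space P. g (fst z) (snd (snd z)) \<le> t} = (\<Sum>jk\<in>{1..K}\<times>{1..K}. measure P (E (fst jk) (snd jk)))"
    apply (simp only:)
    apply (rule finite_measure_finite_Union)
      apply simp
     apply (use Em in force)
    apply (auto simp: disjoint_family_on_def E_def)
    done
  also have "\<dots> \<le> (\<Sum>jk\<in>{1..K}\<times>{1..K}. (measure P (D (snd jk) (snd jk)) / p (snd jk)) * q (fst jk) (snd jk))"
    by (intro sum_mono) (use Ele in auto)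
  also have "\<dots> = (\<Sum>j\<in>{1..K}. \<Sum>k\<in>{1..K}. (measure P (D k k) / p k) * q j k)"
    by (simp add: sum.cartesian_product case_prod_beta)
  also have "\<dots> = (\<Sum>k\<in>{1..K}. \<Sum>j\<in>{1..K}. (measure P (D k k) / p k) * q j k)"
    by (rule sum.swap)
  also have "\<dots> = (\<Sum>k\<in>{1..K}. measure P (D k k))"
  proof (rule sum.cong[OF refl])
    fix k assume k: "k \<in> {1..K}"
    have "(\<Sum>j\<in>{1..K}. (measure P (D k k) / p k) * q j k) = (measure P (D k k) / p k) * p k"
      by (simp only: sum_distrib_left[symmetric] qsum)
    also have "\<dots> = measure P (D k k)" using pos_Y k unfolding p_def by force
    finally show "(\<Sum>j\<in>{1..K}. (measure P (D k k) / p k) * q j k) = measure P (D k k)" .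
  qed
  also have "\<dots> = measure P (\<Union>k\<in>{1..K}. D k k)"
    apply (rule finite_measure_finite_Union[symmetric])
      apply simp
     apply (use Dm in force)
    apply (auto simp: disjoint_family_on_def D_def)
    done
  also have "(\<Union>k\<in>{1..K}. D k k) = {z\<in>space P. g (fst z) (fst (snd z)) \<le> t}"
    using sp unfolding D_def by force
  finally show ?thesis .
qed

lemma score_bounds:
  assumes "prediction_function K C" "k \<in> {1..K}"
  shows "0 \<le> score K C x k \<and> score K C x k \<le> 1"
proof -
  define S where "S = {\<tau> k | \<tau>. \<tau> \<in> tau_cube K \<and> k \<in> C x \<tau>}"
  have one: "(\<lambda>_. 1) \<in> tau_cube K" unfolding tau_cube_def by simp
  have H: "\<forall>x. \<forall>k\<in>{1..K}. \<forall>\<tau>\<in>tau_cube K. \<tau> k = 1 \<longrightarrow> k \<in> C x \<tau>"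
    using assms(1) unfolding prediction_function_def by (elim conjE) assumption
  have "k \<in> C x (\<lambda>_. 1)"
    using H[THEN spec[of _ x], THEN bspec[OF _ assms(2)], THEN bspec[OF _ one]] by simp
  then have s1: "1 \<in> S" using one unfolding S_def by (intro CollectI exI[of _ "\<lambda>_. 1"]) simp
  have lb: "\<forall>v\<in>S. 0 \<le> v \<and> v \<le> 1" using assms(2) unfolding tau_cube_def S_def by fastforce
  have bdd: "bdd_below S" using lb unfolding bdd_below_def by blast
  have "Inf S \<le> 1" by (rule cInf_lower[OF s1 bdd])
  moreover have "0 \<le> Inf S" using s1 lb by (intro cInf_greatest) auto
  ultimately show ?thesis unfolding score_def S_def by simp
qed

lemma card_pred_meas:
  fixes f :: "nat \<Rightarrow> 'a \<Rightarrow> real"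
  assumes A: "finite A" and f: "\<And>l. l \<in> A \<Longrightarrow> f l \<in> borel_measurable M" and h: "h \<in> borel_measurable M"
  shows "{\<omega>\<in>space M. card {l\<in>A. f l \<omega> < h \<omega>} < j} \<in> sets M"
proof -
  have eq: "card {l\<in>A. f l \<omega> < h \<omega>} < j \<longleftrightarrow> (\<Sum>l\<in>A. indicator {\<omega>\<in>space M. f l \<omega> < h \<omega>} \<omega>) < real j"
    if "\<omega> \<in> space M" for \<omega>
  proof -
    have "(\<Sum>l\<in>A. indicator {\<omega>\<in>space M. f l \<omega> < h \<omega>} \<omega> :: real) = (\<Sum>l\<in>{l\<in>A. f l \<omega> < h \<omega>}. 1)"
      using A that by (simp add: sum.If_cases indicator_def Int_def)
    then show ?thesis by simp
  qed
  have ms: "{\<omega>\<in>space M. f l \<omega> < h \<omega>} \<in> sets M" if "l \<in> A" for l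
  proof -
    note [measurable] = f[OF that] h
    show ?thesis by measurable
  qed
  have "(\<lambda>\<omega>. (\<Sum>l\<in>A. indicator {\<omega>\<in>space M. f l \<omega> < h \<omega>} \<omega> :: real)) \<in> borel_measurable M"
    using ms by (intro borel_measurable_sum borel_measurable_indicator) auto
  then have "{\<omega>\<in>space M. (\<Sum>l\<in>A. indicator {\<omega>\<in>space M. f l \<omega> < h \<omega>} \<omega> :: real) < real j} \<in> sets M"
    by measurable
  also have "{\<omega>\<in>space M. (\<Sum>l\<in>A. indicator {\<omega>\<in>space M. f l \<omega> < h \<omega>} \<omega> :: real) < real j}
     = {\<omega>\<in>space M. card {l\<in>A. f l \<omega> < h \<omega>} < j}" using eq by auto
  finally show ?thesis .
qed

theorem mainTheorem15:
  fixes K n :: nat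
    and P :: "((real^('d::finite)) \<times> nat \<times> nat) measure"
    and Dtrain Dcal :: "nat set"
    and \<alpha> :: real
    and C :: "(nat \<Rightarrow> (real^'d) \<times> nat \<times> nat) \<Rightarrow> real^'d \<Rightarrow> (nat \<Rightarrow> real) \<Rightarrow> nat set"
  defines "\<Omega> \<equiv> PiM {1..Suc n} (\<lambda>_. P)"
    and "\<tau>hat \<equiv> (\<lambda>\<omega>. conf_threshold \<alpha>
            (image_mset (\<lambda>i. score K (C \<omega>) (fst (\<omega> i)) (snd (snd (\<omega> i)))) (mset_set Dcal)))"
    and "F \<equiv> (\<lambda>\<omega> t. measure P {z \<in> space P. score K (C \<omega>) (fst z) (fst (snd z)) \<le> t})"
    and "Ftil \<equiv> (\<lambda>\<omega> t. measure P {z \<in> space P. score K (C \<omega>) (fst z) (snd (snd z)) \<le> t})"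
    and "Fcl \<equiv> (\<lambda>\<omega> l k t. measure P {z \<in> space P. fst (snd z) = k \<and> score K (C \<omega>) (fst z) l \<le> t}
                          / measure P {z \<in> space P. fst (snd z) = k})"
  assumes K2: "K \<ge> 2" and n2: "n \<ge> 2"
    and alpha: "0 < \<alpha>" "\<alpha> < 1"
    and P_prob: "prob_space P"
    and P_sets: "sets P = sets (borel \<Otimes>\<^sub>M count_space {1..K} \<Otimes>\<^sub>M count_space {1..K})"
    and split: "Dtrain \<union> Dcal = {1..n}" "Dtrain \<inter> Dcal = {}" "Dtrain \<noteq> {}" "Dcal \<noteq> {}"
    and pos_Y: "\<forall>k\<in>{1..K}. measure P {z \<in> space P. fst (snd z) = k} > 0"
    and pos_Ytil: "\<forall>k\<in>{1..K}. measure P {z \<in> space P. snd (snd z) = k} > 0"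
    and cond_indep: "\<forall>A\<in>sets (borel :: (real^'d) measure). \<forall>j\<in>{1..K}. \<forall>k\<in>{1..K}.
        measure P {z \<in> space P. fst z \<in> A \<and> snd (snd z) = j \<and> fst (snd z) = k}
          / measure P {z \<in> space P. fst (snd z) = k}
        = (measure P {z \<in> space P. fst z \<in> A \<and> fst (snd z) = k}
            / measure P {z \<in> space P. fst (snd z) = k})
        * (measure P {z \<in> space P. snd (snd z) = j \<and> fst (snd z) = k}
            / measure P {z \<in> space P. fst (snd z) = k})"
    and C_pred: "\<forall>\<omega>\<in>space \<Omega>. prediction_function K (C \<omega>)"
    and C_train: "\<forall>\<omega>\<in>space \<Omega>. \<forall>\<omega>'\<in>space \<Omega>.
        (\<forall>i\<in>Dtrain. fst (\<omega> i) = fst (\<omega>' i) \<and> snd (snd (\<omega> i)) = snd (snd (\<omega>' i)))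
        \<longrightarrow> C \<omega> = C \<omega>'"
    and s_meas: "\<forall>k\<in>{1..K}. (\<lambda>(\<omega>, x). score K (C \<omega>) x k) \<in> borel_measurable (\<Omega> \<Otimes>\<^sub>M borel)"
    and dominance: "AE \<omega> in \<Omega>. \<forall>t::real. \<forall>k\<in>{1..K}. \<forall>l\<in>{1..K}.
        l \<noteq> k \<longrightarrow> Fcl \<omega> l k t \<le> Fcl \<omega> k k t"
  shows "(AE \<omega> in \<Omega>. F \<omega> (\<tau>hat \<omega>) - Ftil \<omega> (\<tau>hat \<omega>) \<ge> 0)
       \<and> measure \<Omega> {\<omega> \<in> space \<Omega>.
           fst (snd (\<omega> (Suc n))) \<in> C \<omega> (fst (\<omega> (Suc n))) (\<lambda>_. \<tau>hat \<omega>)} \<ge> 1 - \<alpha>"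
  proof -
  interpret Pp: prob_space P by (rule P_prob)
  have OmP: "prob_space \<Omega>" unfolding \<Omega>_def by (rule prob_space_PiM) (rule P_prob)
  interpret Om: prob_space \<Omega> by (rule OmP)
  interpret PP: product_sigma_finite "\<lambda>_::nat. P"
    by (simp add: product_sigma_finite_def prob_space_imp_sigma_finite P_prob)
  define sp where "sp = space \<Omega>"
  define V where "V l \<omega> = score K (C \<omega>) (fst (\<omega> l)) (snd (snd (\<omega> l)))" for l \<omega>
  define T where "T \<omega> = score K (C \<omega>) (fst (\<omega> (Suc n))) (fst (snd (\<omega> (Suc n))))" for \<omega>
  define m where "m = card Dcal"
  define j where "j = nat \<lceil>(1 + real m) * (1 - \<alpha>)\<rceil>"
  define I where "I = {1..Suc n}"
  have spP: "space P = UNIV \<times> {1..K} \<times> {1..K}"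
    using sets_eq_imp_space_eq[OF P_sets] by (simp add: space_pair_measure)
  have inP: "\<omega> l \<in> space P" if "\<omega> \<in> sp" "l \<in> I" for \<omega> l
    using that unfolding sp_def \<Omega>_def I_def by (auto simp: space_PiM PiE_iff)
  have DcalI: "Dcal \<subseteq> {1..n}" "Dtrain \<subseteq> {1..n}" using split by auto
  have finD: "finite Dcal" using DcalI finite_subset by blast
  have j1: "1 \<le> j"
  proof -
    have "0 < (1 + real m) * (1 - \<alpha>)" using alpha by simp
    then show ?thesis unfolding j_def by linarith
  qed
  have Cp: "prediction_function K (C \<omega>)" if "\<omega> \<in> sp" for \<omega> using C_pred that sp_def by blast
  have Vb: "0 \<le> V l \<omega> \<and> V l \<omega> \<le> 1" if "\<omega> \<in> sp" "l \<in> I" for \<omega> l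
    unfolding V_def using score_bounds[OF Cp[OF that(1)]] inP[OF that] spP by auto
  have Tb: "0 \<le> T \<omega> \<and> T \<omega> \<le> 1" if "\<omega> \<in> sp" for \<omega>
  proof -
    have "\<omega> (Suc n) \<in> space P" using inP[OF that] I_def by auto
    then have "fst (snd (\<omega> (Suc n))) \<in> {1..K}" using spP by (auto simp: mem_Times_iff)
    then show ?thesis unfolding T_def by (rule score_bounds[OF Cp[OF that]])
  qed
  have thr: "\<tau>hat \<omega> = (if j > m then 1 else sorted_list_of_multiset (image_mset (\<lambda>i. V i \<omega>) (mset_set Dcal)) ! (j - 1))" for \<omega>
    unfolding \<tau>hat_def conf_threshold_def V_def j_def m_def Let_def by simp
  have k1: "v \<le> \<tau>hat \<omega> \<longleftrightarrow> card {l\<in>Dcal. V l \<omega> < v} < j" if "\<omega> \<in> sp" "v \<le> 1" for \<omega> v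
  proof (cases "j > m")
    case True
    have "card {l\<in>Dcal. V l \<omega> < v} \<le> m" unfolding m_def using finD by (intro card_mono) auto
    then show ?thesis using True that thr[of \<omega>] by auto
  next
    case False
    let ?S = "image_mset (\<lambda>i. V i \<omega>) (mset_set Dcal)"
    have sz: "size ?S = m" unfolding m_def by simp
    have fl: "size (filter_mset (\<lambda>x. x < v) ?S) = card {l\<in>Dcal. V l \<omega> < v}"
      using finD by (simp add: filter_mset_image_mset)
    have "v \<le> sorted_list_of_multiset ?S ! (j - 1) \<longleftrightarrow> size (filter_mset (\<lambda>x. x < v) ?S) < j"
      by (rule kth_le_iff) (use j1 False sz in auto)
    then show ?thesis using False thr[of \<omega>] fl by simp
  qed
  have k2: "0 \<le> \<tau>hat \<omega> \<and> \<tau>hat \<omega> \<le> 1" if "\<omega> \<in> sp" for \<omega>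
  proof (cases "j > m")
    case True then show ?thesis using thr[of \<omega>] by simp
  next
    case False
    let ?S = "image_mset (\<lambda>i. V i \<omega>) (mset_set Dcal)"
    have "length (sorted_list_of_multiset ?S) = size ?S"
      by (metis mset_sorted_list_of_multiset size_mset)
    then have sz: "length (sorted_list_of_multiset ?S) = m" unfolding m_def by simp
    have "sorted_list_of_multiset ?S ! (j - 1) \<in> set (sorted_list_of_multiset ?S)"
      using False j1 sz by (intro nth_mem) auto
    then have "sorted_list_of_multiset ?S ! (j - 1) \<in> (\<lambda>i. V i \<omega>) ` Dcal" using finD by simp
    then obtain l where l: "l \<in> Dcal" "sorted_list_of_multiset ?S ! (j - 1) = V l \<omega>" by auto
    have "l \<in> I" using l DcalI I_def by auto
    then show ?thesis using thr[of \<omega>] False l Vb[OF that] by simp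
  qed
  have k3: "fst (snd (\<omega> (Suc n))) \<in> C \<omega> (fst (\<omega> (Suc n))) (\<lambda>_. \<tau>hat \<omega>) \<longleftrightarrow> T \<omega> \<le> \<tau>hat \<omega>"
    if "\<omega> \<in> sp" for \<omega>
  proof -
    have H: "\<forall>x. \<forall>k\<in>{1..K}. \<forall>\<tau>\<in>tau_cube K. k \<in> C \<omega> x \<tau> \<longleftrightarrow> score K (C \<omega>) x k \<le> \<tau> k"
      using Cp[OF that] unfolding prediction_function_def by (elim conjE) assumption
    have cube: "(\<lambda>_. \<tau>hat \<omega>) \<in> tau_cube K" using k2[OF that] unfolding tau_cube_def by simp
    have lab: "fst (snd (\<omega> (Suc n))) \<in> {1..K}" using inP[OF that, of "Suc n"] spP I_def by auto
    show ?thesis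
      using H[THEN spec[of _ "fst (\<omega> (Suc n))"], THEN bspec[OF _ lab], THEN bspec[OF _ cube]]
      unfolding T_def by simp
  qed
  have compP: "(\<lambda>\<omega>. \<omega> l) \<in> measurable \<Omega> P" if "l \<in> I" for l
    unfolding \<Omega>_def using that I_def by (intro measurable_component_singleton) auto
  let ?M = "borel \<Otimes>\<^sub>M count_space {1..K} \<Otimes>\<^sub>M count_space {1..K} :: ((real^'d) \<times> nat \<times> nat) measure"
  have mcs: "measurable P N = measurable ?M N" for N :: "'z measure"
    by (rule measurable_cong_sets[OF P_sets refl])
  have fstP: "fst \<in> measurable P borel" unfolding mcs by (rule measurable_fst)
  have lab1P: "(\<lambda>z. fst (snd z)) \<in> measurable P (count_space {1..K})" unfolding mcs
    by (rule measurable_compose[OF measurable_snd measurable_fst])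
  have lab2P: "(\<lambda>z. snd (snd z)) \<in> measurable P (count_space {1..K})" unfolding mcs
    by (rule measurable_compose[OF measurable_snd measurable_snd])
  have scm: "(\<lambda>\<omega>. score K (C \<omega>) (fst (\<omega> l)) k) \<in> borel_measurable \<Omega>" if "l \<in> I" "k \<in> {1..K}" for l k
  proof -
    have "(\<lambda>\<omega>. (\<omega>, fst (\<omega> l))) \<in> measurable \<Omega> (\<Omega> \<Otimes>\<^sub>M borel)"
      by (intro measurable_Pair measurable_ident_sets[OF refl] measurable_compose[OF compP[OF that(1)] fstP])
    from measurable_compose[OF this s_meas[rule_format, OF that(2)]] show ?thesis by simp
  qed
  have Vm: "V l \<in> borel_measurable \<Omega>" if "l \<in> I" for l
  proof -
    have "(\<lambda>\<omega>. (\<lambda>k \<omega>. score K (C \<omega>) (fst (\<omega> l)) k) (snd (snd (\<omega> l))) \<omega>) \<in> borel_measurable \<Omega>"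
      by (rule measurable_compose_countable'[OF _ measurable_compose[OF compP[OF that] lab2P]])
         (auto intro: scm[OF that])
    then show ?thesis unfolding V_def[abs_def] by simp
  qed
  have Tm: "T \<in> borel_measurable \<Omega>"
  proof -
    have that: "Suc n \<in> I" using I_def by simp
    have "(\<lambda>\<omega>. (\<lambda>k \<omega>. score K (C \<omega>) (fst (\<omega> (Suc n))) k) (fst (snd (\<omega> (Suc n)))) \<omega>) \<in> borel_measurable \<Omega>"
      by (rule measurable_compose_countable'[OF _ measurable_compose[OF compP[OF that] lab1P]])
         (auto intro: scm[OF that])
    then show ?thesis unfolding T_def[abs_def] by simp
  qed
  have gm: "(\<lambda>x. score K (C \<omega>) x k) \<in> borel_measurable borel" if "\<omega> \<in> sp" "k \<in> {1..K}" for \<omega> k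
  proof -
    have "(\<lambda>x. (\<omega>, x)) \<in> measurable borel (\<Omega> \<Otimes>\<^sub>M borel)"
      using measurable_Pair1'[of \<omega> \<Omega> borel] that sp_def by simp
    from measurable_compose[OF this s_meas[rule_format, OF that(2)]] show ?thesis by simp
  qed
  have part1: "F \<omega> t - Ftil \<omega> t \<ge> 0" if "\<omega> \<in> sp" and dom: "\<forall>t::real. \<forall>k\<in>{1..K}. \<forall>l\<in>{1..K}.
        l \<noteq> k \<longrightarrow> Fcl \<omega> l k t \<le> Fcl \<omega> k k t" for \<omega> t
  proof -
    have d: "\<forall>k\<in>{1..K}. \<forall>l\<in>{1..K}. l \<noteq> k \<longrightarrow> Fcl \<omega> l k t \<le> Fcl \<omega> k k t"
      using dom by (rule spec)
    have "measure P {z\<in>space P. score K (C \<omega>) (fst z) (snd (snd z)) \<le> t}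
       \<le> measure P {z\<in>space P. score K (C \<omega>) (fst z) (fst (snd z)) \<le> t}"
      by (rule part1[OF P_prob P_sets pos_Y cond_indep gm[OF that(1)]])
         (use d in \<open>unfold Fcl_def\<close>)
    then show ?thesis unfolding F_def Ftil_def by simp
  qed
  have AE1: "AE \<omega> in \<Omega>. F \<omega> (\<tau>hat \<omega>) - Ftil \<omega> (\<tau>hat \<omega>) \<ge> 0"
    using dominance
  proof (rule AE_mp)
    show "AE \<omega> in \<Omega>. (\<forall>t::real. \<forall>k\<in>{1..K}. \<forall>l\<in>{1..K}.
        l \<noteq> k \<longrightarrow> Fcl \<omega> l k t \<le> Fcl \<omega> k k t) \<longrightarrow> F \<omega> (\<tau>hat \<omega>) - Ftil \<omega> (\<tau>hat \<omega>) \<ge> 0"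
      by (rule AE_I2) (use part1 sp_def in blast)
  qed
  define J where "J = insert (Suc n) Dcal"
  define G where "G i = {\<omega>\<in>sp. card {l\<in>J. V l \<omega> < V i \<omega>} < j}" for i
  define AV where "AV = {\<omega>\<in>sp. V (Suc n) \<omega> \<le> \<tau>hat \<omega>}"
  define AT where "AT = {\<omega>\<in>sp. T \<omega> \<le> \<tau>hat \<omega>}"
  have JI: "J \<subseteq> I" using DcalI unfolding J_def I_def by auto
  have finJ: "finite J" using finD J_def by simp
  have SnD: "Suc n \<notin> Dcal" using DcalI by auto
  have cardJ: "card J = m + 1" using finD SnD unfolding J_def m_def by simp
  have AVeq: "AV = {\<omega>\<in>sp. card {l\<in>Dcal. V l \<omega> < V (Suc n) \<omega>} < j}"
    unfolding AV_def using k1 Vb I_def by auto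
  have ATeq: "AT = {\<omega>\<in>sp. card {l\<in>Dcal. V l \<omega> < T \<omega>} < j}"
    unfolding AT_def using k1 Tb by auto
  have SnI: "Suc n \<in> I" using I_def by simp
  have AVm: "AV \<in> sets \<Omega>" unfolding AVeq sp_def
    by (rule card_pred_meas[OF finD]) (use Vm DcalI I_def SnI in auto)
  have ATm: "AT \<in> sets \<Omega>" unfolding ATeq sp_def
    by (rule card_pred_meas[OF finD]) (use Vm DcalI I_def Tm in auto)
  have Gm: "G i \<in> sets \<Omega>" if "i \<in> J" for i unfolding G_def sp_def
    by (rule card_pred_meas[OF finJ]) (use Vm JI that in auto)
  have GSn: "G (Suc n) = AV"
  proof -
    have "{l\<in>J. V l \<omega> < V (Suc n) \<omega>} = {l\<in>Dcal. V l \<omega> < V (Suc n) \<omega>}" for \<omega>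
      unfolding J_def by auto
    then show ?thesis unfolding G_def AVeq by simp
  qed
  have swap: "measure \<Omega> (G i) = measure \<Omega> (G (Suc n))" if iJ: "i \<in> J" for i
  proof -
    define sw where "sw k = (if k = i then Suc n else if k = Suc n then i else k)" for k
    define \<pi> where "\<pi> \<omega> = (\<lambda>k\<in>I. \<omega> (sw k))" for \<omega> :: "nat \<Rightarrow> (real^'d) \<times> nat \<times> nat"
    have iI: "i \<in> I" using iJ JI by auto
    have swI: "sw k \<in> I" if "k \<in> I" for k using that iI SnI unfolding sw_def by auto
    have swsw: "sw (sw k) = k" for k unfolding sw_def by auto
    have injsw: "inj_on sw I" by (metis inj_onI swsw)
    have \<pi>m: "\<pi> \<in> measurable \<Omega> \<Omega>"
      unfolding \<pi>_def \<Omega>_def I_def[symmetric]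
      by (intro measurable_restrict measurable_component_singleton swI)
    have distr: "distr \<Omega> \<Omega> \<pi> = \<Omega>"
      using distr_PiM_reindex[of I "\<lambda>_. P" sw I] P_prob injsw swI
      unfolding \<Omega>_def I_def[symmetric] \<pi>_def[abs_def] by auto
    have swJ: "sw k \<in> J" if "k \<in> J" for k using that iJ unfolding sw_def J_def by auto
    have key: "\<pi> \<omega> \<in> sp \<and> card {l\<in>J. V l (\<pi> \<omega>) < V (Suc n) (\<pi> \<omega>)} = card {l\<in>J. V l \<omega> < V i \<omega>}"
      if \<omega>sp: "\<omega> \<in> sp" for \<omega>
    proof -
      have \<pi>sp: "\<pi> \<omega> \<in> sp" using measurable_space[OF \<pi>m] \<omega>sp sp_def by auto
      have trn: "\<pi> \<omega> l = \<omega> l" if "l \<in> Dtrain" for l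
      proof -
        have "l \<in> I" "l \<noteq> i" "l \<noteq> Suc n" using that iJ split DcalI I_def unfolding J_def by auto
        then show ?thesis unfolding \<pi>_def sw_def by simp
      qed
      have Ceq: "C (\<pi> \<omega>) = C \<omega>"
      proof -
        have "\<forall>l\<in>Dtrain. fst (\<pi> \<omega> l) = fst (\<omega> l) \<and> snd (snd (\<pi> \<omega> l)) = snd (snd (\<omega> l))"
          using trn by simp
        then show ?thesis
          using C_train[THEN bspec[OF _ \<pi>sp[unfolded sp_def]], THEN bspec[OF _ \<omega>sp[unfolded sp_def]]] by simp
      qed
      have Vsw: "V l (\<pi> \<omega>) = V (sw l) \<omega>" if "l \<in> I" for l
        unfolding V_def Ceq using that unfolding \<pi>_def by simp
      have swn: "sw (Suc n) = i" unfolding sw_def by simp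
      have "{l\<in>J. V l (\<pi> \<omega>) < V (Suc n) (\<pi> \<omega>)} = {l\<in>J. V (sw l) \<omega> < V i \<omega>}"
        using Vsw JI SnI swn by auto
      also have "\<dots> = sw ` {l\<in>J. V l \<omega> < V i \<omega>}"
      proof (intro set_eqI iffI)
        fix x assume x: "x \<in> {l\<in>J. V (sw l) \<omega> < V i \<omega>}"
        then have "sw x \<in> {l\<in>J. V l \<omega> < V i \<omega>}" using swJ by auto
        then show "x \<in> sw ` {l\<in>J. V l \<omega> < V i \<omega>}" using swsw[of x] by (metis image_eqI)
      next
        fix x assume "x \<in> sw ` {l\<in>J. V l \<omega> < V i \<omega>}"
        then obtain y where "y \<in> J" "V y \<omega> < V i \<omega>" "x = sw y" by auto
        then show "x \<in> {l\<in>J. V (sw l) \<omega> < V i \<omega>}" using swJ swsw by auto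
      qed
      finally have "card {l\<in>J. V l (\<pi> \<omega>) < V (Suc n) (\<pi> \<omega>)} = card (sw ` {l\<in>J. V l \<omega> < V i \<omega>})" by simp
      also have "\<dots> = card {l\<in>J. V l \<omega> < V i \<omega>}"
        by (rule card_image) (metis inj_onI swsw)
      finally show ?thesis using \<pi>sp by simp
    qed
    have pre: "\<pi> -` G (Suc n) \<inter> sp = G i"
      unfolding G_def using key by auto
    have "measure \<Omega> (G (Suc n)) = measure (distr \<Omega> \<Omega> \<pi>) (G (Suc n))" using distr by simp
    also have "\<dots> = measure \<Omega> (\<pi> -` G (Suc n) \<inter> space \<Omega>)"
      by (rule measure_distr[OF \<pi>m Gm]) (simp add: J_def)
    also have "\<dots> = measure \<Omega> (G i)" using pre sp_def by simp
    finally show ?thesis by simp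
  qed
  have P2b: "1 - \<alpha> \<le> measure \<Omega> AV"
  proof (cases "j > m")
    case True
    have "AV = sp"
    proof -
      have "card {l\<in>Dcal. V l \<omega> < V (Suc n) \<omega>} \<le> m" for \<omega>
        unfolding m_def using finD by (intro card_mono) auto
      then show ?thesis unfolding AVeq using True by (auto intro: le_less_trans)
    qed
    then have "measure \<Omega> AV = 1" using Om.prob_space sp_def by simp
    then show ?thesis using alpha by simp
  next
    case False
    have jJ: "j \<le> card J" using False cardJ by simp
    have intG: "integrable \<Omega> (indicator (G i) :: _ \<Rightarrow> real)" if "i \<in> J" for i
      using Gm[OF that] by (intro integrable_real_indicator) (auto simp: less_top[symmetric])
    have cnt: "real j \<le> (\<Sum>i\<in>J. indicator (G i) \<omega> :: real)" if "\<omega> \<in> space \<Omega>" for \<omega>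
    proof -
      have "(\<Sum>i\<in>J. indicator (G i) \<omega> :: real) = real (card {i\<in>J. \<omega> \<in> G i})"
        using finJ by (simp add: indicator_def sum.If_cases Int_def)
      also have "{i\<in>J. \<omega> \<in> G i} = {i\<in>J. card {l\<in>J. V l \<omega> < V i \<omega>} < j}"
        unfolding G_def using that sp_def by auto
      finally show ?thesis using many_good[OF finJ jJ, of "\<lambda>l. V l \<omega>"] by simp
    qed
    have "real j = integral\<^sup>L \<Omega> (\<lambda>_. real j)" using Om.prob_space by simp
    also have "\<dots> \<le> integral\<^sup>L \<Omega> (\<lambda>\<omega>. \<Sum>i\<in>J. indicator (G i) \<omega> :: real)"
      by (rule integral_mono) (use cnt intG in auto)
    also have "\<dots> = (\<Sum>i\<in>J. integral\<^sup>L \<Omega> (indicator (G i) :: _ \<Rightarrow> real))"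
      using Bochner_Integration.integral_sum[where I=J and M=\<Omega> and f="\<lambda>i. indicator (G i) :: _ \<Rightarrow> real", OF intG] by simp
    also have "\<dots> = (\<Sum>i\<in>J. measure \<Omega> (G i))"
      using Gm by (intro sum.cong refl) (simp add: Int_absorb2 sets.sets_into_space)
    also have "\<dots> = (\<Sum>i\<in>J. measure \<Omega> AV)"
      using swap GSn by (intro sum.cong refl) simp
    also have "\<dots> = (real m + 1) * measure \<Omega> AV" using cardJ by simp
    finally have A: "real j \<le> (real m + 1) * measure \<Omega> AV" .
    have B: "(1 + real m) * (1 - \<alpha>) \<le> real j" unfolding j_def by linarith
    from A B have "(real m + 1) * (1 - \<alpha>) \<le> (real m + 1) * measure \<Omega> AV" by (simp add: algebra_simps)
    then show ?thesis by (simp add: mult_le_cancel_left_pos)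
  qed
  have P2a: "measure \<Omega> AV \<le> measure \<Omega> AT"
  proof -
    let ?O = "PiM {1..n} (\<lambda>_::nat. P)"
    have Ieq: "{1..Suc n} = insert (Suc n) {1..n}" by auto
    have fub: "integral\<^sup>N \<Omega> f = (\<integral>\<^sup>+x. (\<integral>\<^sup>+y. f (x(Suc n := y)) \<partial>P) \<partial>?O)"
      if "f \<in> borel_measurable \<Omega>" for f
      using that unfolding \<Omega>_def Ieq by (intro PP.product_nn_integral_insert) auto
    have upd: "x(Suc n := y) \<in> sp" if "x \<in> space ?O" "y \<in> space P" for x y
      using that unfolding sp_def \<Omega>_def by (auto simp: space_PiM PiE_iff extensional_def)
    have updm: "(\<lambda>y. x(Suc n := y)) \<in> measurable P \<Omega>" if "x \<in> space ?O" for x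
      using measurable_component_update[OF that, of "Suc n"] unfolding \<Omega>_def Ieq by simp
    have Ceq2: "C (x(Suc n := y)) = C (x(Suc n := y'))"
      if "x \<in> space ?O" "y \<in> space P" "y' \<in> space P" for x y y'
    proof -
      have "\<forall>l\<in>Dtrain. fst ((x(Suc n := y)) l) = fst ((x(Suc n := y')) l) \<and>
              snd (snd ((x(Suc n := y)) l)) = snd (snd ((x(Suc n := y')) l))"
        using DcalI by auto
      then show ?thesis
        using C_train[THEN bspec[OF _ upd[OF that(1,2), unfolded sp_def]],
                      THEN bspec[OF _ upd[OF that(1,3), unfolded sp_def]]] by simp
    qed
    have teq: "\<tau>hat (x(Suc n := y)) = \<tau>hat (x(Suc n := y'))"
      if "x \<in> space ?O" "y \<in> space P" "y' \<in> space P" for x y y'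
    proof -
      have "image_mset (\<lambda>i. score K (C (x(Suc n := y))) (fst ((x(Suc n := y)) i)) (snd (snd ((x(Suc n := y)) i)))) (mset_set Dcal)
          = image_mset (\<lambda>i. score K (C (x(Suc n := y'))) (fst ((x(Suc n := y')) i)) (snd (snd ((x(Suc n := y')) i)))) (mset_set Dcal)"
        unfolding Ceq2[OF that] by (intro image_mset_cong) (use finD DcalI in auto)
      then show ?thesis unfolding \<tau>hat_def by simp
    qed
    define y0 where "y0 = (SOME y. y \<in> space P)"
    have y0: "y0 \<in> space P" unfolding y0_def using Pp.not_empty by (simp add: some_in_eq)
    define w where "w x = x(Suc n := y0)" for x
    have wsp: "w x \<in> sp" if "x \<in> space ?O" for x using upd[OF that y0] w_def by simp
    have hT: "(\<integral>\<^sup>+y. indicator AT (x(Suc n := y)) \<partial>P) = ennreal (F (w x) (\<tau>hat (w x)))"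
      if x: "x \<in> space ?O" for x
    proof -
      define B where "B = {z\<in>space P. score K (C (w x)) (fst z) (fst (snd z)) \<le> \<tau>hat (w x)}"
      have "(\<lambda>z. (\<lambda>k z. score K (C (w x)) (fst z) k) (fst (snd z)) z) \<in> borel_measurable P"
        by (rule measurable_compose_countable'[OF _ lab1P])
           (auto intro: measurable_compose[OF fstP gm[OF wsp[OF x]]])
      then have [measurable]: "(\<lambda>z. score K (C (w x)) (fst z) (fst (snd z))) \<in> borel_measurable P" by simp
      have Bm: "B \<in> sets P" unfolding B_def by measurable
      have eq: "indicator AT (x(Suc n := y)) = (indicator B y :: ennreal)" if y: "y \<in> space P" for y
      proof -
        have "x(Suc n := y) \<in> sp" by (rule upd[OF x y])
        moreover have "C (x(Suc n := y)) = C (w x)" unfolding w_def by (rule Ceq2[OF x y y0])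
        moreover have "\<tau>hat (x(Suc n := y)) = \<tau>hat (w x)" unfolding w_def by (rule teq[OF x y y0])
        ultimately show ?thesis unfolding indicator_def AT_def B_def T_def using y by simp
      qed
      have "(\<integral>\<^sup>+y. indicator AT (x(Suc n := y)) \<partial>P) = (\<integral>\<^sup>+y. indicator B y \<partial>P)"
        by (rule nn_integral_cong) (rule eq)
      also have "\<dots> = emeasure P B" using Bm by simp
      also have "\<dots> = ennreal (measure P B)" by (rule Pp.emeasure_eq_measure)
      finally show ?thesis unfolding B_def F_def by simp
    qed
    have hV: "(\<integral>\<^sup>+y. indicator AV (x(Suc n := y)) \<partial>P) = ennreal (Ftil (w x) (\<tau>hat (w x)))"
      if x: "x \<in> space ?O" for x
    proof -
      define B where "B = {z\<in>space P. score K (C (w x)) (fst z) (snd (snd z)) \<le> \<tau>hat (w x)}"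
      have "(\<lambda>z. (\<lambda>k z. score K (C (w x)) (fst z) k) (snd (snd z)) z) \<in> borel_measurable P"
        by (rule measurable_compose_countable'[OF _ lab2P])
           (auto intro: measurable_compose[OF fstP gm[OF wsp[OF x]]])
      then have [measurable]: "(\<lambda>z. score K (C (w x)) (fst z) (snd (snd z))) \<in> borel_measurable P" by simp
      have Bm: "B \<in> sets P" unfolding B_def by measurable
      have eq: "indicator AV (x(Suc n := y)) = (indicator B y :: ennreal)" if y: "y \<in> space P" for y
      proof -
        have "x(Suc n := y) \<in> sp" by (rule upd[OF x y])
        moreover have "C (x(Suc n := y)) = C (w x)" unfolding w_def by (rule Ceq2[OF x y y0])
        moreover have "\<tau>hat (x(Suc n := y)) = \<tau>hat (w x)" unfolding w_def by (rule teq[OF x y y0])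
        ultimately show ?thesis unfolding indicator_def AV_def B_def V_def using y by simp
      qed
      have "(\<integral>\<^sup>+y. indicator AV (x(Suc n := y)) \<partial>P) = (\<integral>\<^sup>+y. indicator B y \<partial>P)"
        by (rule nn_integral_cong) (rule eq)
      also have "\<dots> = emeasure P B" using Bm by simp
      also have "\<dots> = ennreal (measure P B)" by (rule Pp.emeasure_eq_measure)
      finally show ?thesis unfolding B_def Ftil_def by simp
    qed
    obtain N where N: "{\<omega>\<in>space \<Omega>. \<not> (\<forall>t::real. \<forall>k\<in>{1..K}. \<forall>l\<in>{1..K}.
        l \<noteq> k \<longrightarrow> Fcl \<omega> l k t \<le> Fcl \<omega> k k t)} \<subseteq> N" "emeasure \<Omega> N = 0" "N \<in> sets \<Omega>"
      using dominance by (rule AE_E)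
    define f1 where "f1 \<omega> = (indicator AT \<omega> + \<top> * indicator N \<omega> :: ennreal)" for \<omega> :: "nat \<Rightarrow> (real^'d) \<times> nat \<times> nat"
    have f1m: "f1 \<in> borel_measurable \<Omega>" unfolding f1_def using ATm N(3) by measurable
    have "integral\<^sup>N \<Omega> f1 = emeasure \<Omega> AT + \<top> * emeasure \<Omega> N"
      unfolding f1_def using ATm N(3)
      by (simp add: nn_integral_add nn_integral_cmult)
    then have intf1: "integral\<^sup>N \<Omega> f1 = emeasure \<Omega> AT" using N(2) by simp
    have inner: "(\<integral>\<^sup>+y. f1 (x(Suc n := y)) \<partial>P) = (\<integral>\<^sup>+y. indicator AT (x(Suc n := y)) \<partial>P)
        + \<top> * (\<integral>\<^sup>+y. indicator N (x(Suc n := y)) \<partial>P)" if x: "x \<in> space ?O" for x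
    proof -
      have m1: "(\<lambda>y. indicator AT (x(Suc n := y)) :: ennreal) \<in> borel_measurable P"
        using measurable_compose[OF updm[OF x] borel_measurable_indicator[OF ATm]] by simp
      have m2: "(\<lambda>y. indicator N (x(Suc n := y)) :: ennreal) \<in> borel_measurable P"
        using measurable_compose[OF updm[OF x] borel_measurable_indicator[OF N(3)]] by simp
      show ?thesis unfolding f1_def using m1 m2
        by (simp add: nn_integral_add nn_integral_cmult)
    qed
    have pw: "(\<integral>\<^sup>+y. indicator AV (x(Suc n := y)) \<partial>P) \<le> (\<integral>\<^sup>+y. f1 (x(Suc n := y)) \<partial>P)"
      if x: "x \<in> space ?O" for x
    proof (cases "\<exists>y\<in>space P. x(Suc n := y) \<notin> N")
      case True
      then obtain y where y: "y \<in> space P" "x(Suc n := y) \<notin> N" by blast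
      have "x(Suc n := y) \<in> space \<Omega>" using upd[OF x y(1)] sp_def by simp
      then have dom: "\<forall>t::real. \<forall>k\<in>{1..K}. \<forall>l\<in>{1..K}.
        l \<noteq> k \<longrightarrow> Fcl (x(Suc n := y)) l k t \<le> Fcl (x(Suc n := y)) k k t"
        using N(1) y(2) by blast
      have "Fcl (w x) = Fcl (x(Suc n := y))"
        unfolding Fcl_def w_def Ceq2[OF x y0 y(1)] by (rule refl)
      then have "F (w x) (\<tau>hat (w x)) - Ftil (w x) (\<tau>hat (w x)) \<ge> 0"
        using part1[OF wsp[OF x]] dom by simp
      then have "(\<integral>\<^sup>+y. indicator AV (x(Suc n := y)) \<partial>P) \<le> (\<integral>\<^sup>+y. indicator AT (x(Suc n := y)) \<partial>P)"
        unfolding hT[OF x] hV[OF x] by (simp add: ennreal_leI)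
      also have "\<dots> \<le> (\<integral>\<^sup>+y. f1 (x(Suc n := y)) \<partial>P)" unfolding inner[OF x] by (rule add_increasing2) auto
      finally show ?thesis .
    next
      case False
      have "(\<integral>\<^sup>+y. indicator N (x(Suc n := y)) \<partial>P) = (\<integral>\<^sup>+y. indicator (space P) y \<partial>P)"
        by (rule nn_integral_cong) (use False in auto)
      also have "\<dots> = 1" using Pp.emeasure_space_1 by simp
      finally have "(\<integral>\<^sup>+y. f1 (x(Suc n := y)) \<partial>P) = \<top>" unfolding inner[OF x] by simp
      then show ?thesis by simp
    qed
    have "emeasure \<Omega> AV = integral\<^sup>N \<Omega> (indicator AV)" using AVm by simp
    also have "\<dots> = (\<integral>\<^sup>+x. (\<integral>\<^sup>+y. indicator AV (x(Suc n := y)) \<partial>P) \<partial>?O)"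
      by (rule fub) (use AVm in simp)
    also have "\<dots> \<le> (\<integral>\<^sup>+x. (\<integral>\<^sup>+y. f1 (x(Suc n := y)) \<partial>P) \<partial>?O)"
      by (rule nn_integral_mono) (rule pw)
    also have "\<dots> = integral\<^sup>N \<Omega> f1" by (rule fub[symmetric, OF f1m])
    also have "\<dots> = emeasure \<Omega> AT" by (rule intf1)
    finally show ?thesis by (simp add: Om.emeasure_eq_measure)
  qed
  have "{\<omega> \<in> space \<Omega>. fst (snd (\<omega> (Suc n))) \<in> C \<omega> (fst (\<omega> (Suc n))) (\<lambda>_. \<tau>hat \<omega>)} = AT"
    unfolding AT_def sp_def using k3 sp_def by auto
  then have "1 - \<alpha> \<le> measure \<Omega> {\<omega> \<in> space \<Omega>. fst (snd (\<omega> (Suc n))) \<in> C \<omega> (fst (\<omega> (Suc n))) (\<lambda>_. \<tau>hat \<omega>)}"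
    using P2a P2b by simp
  then show ?thesis using AE1 by simp
qed


end
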